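(* For any two distinct elements $\bar c,\bar a$ of $\mathcal C$, the line segment $\bar c\bar a$ meets $\operatorname{conv}(\frac12(d+\mathcal W))$.
   Context: Setting: $G$ compact Lie group, $K\subset G$ closed, $G/K$ connected almost effective, isotropy representation $\mathfrak p=\mathfrak p_1\oplus\cdots\oplus\mathfrak p_r$ ($r\ge2$) with pairwise inequivalent $\mathbb R$-irreducible summands, $d_i=\dim\mathfrak p_i$, $d=(d_1,\dots,d_r)$, $n=\sum d_i$. The scalar curvature of the metric $e^{q_i}Q$ on $\mathfrak p_i$ is $S(q)=\sum_{w\in\mathcal W}A_we^{w\cdot q}$, $\mathcal W\subset\mathbb Z^r$ finite, $A_w\ne0$, each $w$ of type I (one entry $-1$), type II (one entry $1$, two entries $-1$) or type III (one entry $1$, one entry $-2$), other entries $0$; $A_w>0$ for type I and $<0$ otherwise. Assume $\dim\operatorname{conv}(\mathcal W)=r-1$. $J$ is the symmetric bilinear form with $J(p,p)=\frac1{n-1}(\sum p_i)^2-\sum p_i^2/d_i$. $u=\sum_{\bar c\in\mathcal C}F_{\bar c}e^{\bar c\cdot q}$ ($\mathcal C$ finite, $F_{\bar c}\ne0$) is a superpotential: for every $\xi$, $\sum_{(\bar a,\bar c)\in\mathcal C^2,\ \bar a+\bar c=\xi}J(\bar a,\bar c)F_{\bar a}F_{\bar c}$ equals $A_w$ if $\xi=d+w$, $w\in\mathcal W$, and $0$ otherwise; $\mathcal C$ is normalised to lie in $\{\sum\bar x_i=\frac12(n-1)\}$. *)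

theory Defs
  imports "HOL-Analysis.Analysis"
begin

text \<open>Vectors in R^r are modelled as real^'r with CARD('r) = r.
  The dimensions d_i are given as d :: nat^'r.\<close>

definition dvec :: "nat^'r \<Rightarrow> real^'r" where
  "dvec d = (\<chi> i. real (d $ i))"

definition ndim :: "nat^'r::finite \<Rightarrow> nat" where
  "ndim d = (\<Sum>i\<in>UNIV. d $ i)"

definition typeI :: "real^'r \<Rightarrow> bool" where
  "typeI w \<longleftrightarrow> (\<exists>i. w $ i = -1 \<and> (\<forall>j. j \<noteq> i \<longrightarrow> w $ j = 0))"

definition typeII :: "real^'r \<Rightarrow> bool" where
  "typeII w \<longleftrightarrow> (\<exists>i j k. i \<noteq> j \<and> i \<noteq> k \<and> j \<noteq> k \<and>
      w $ i = 1 \<and> w $ j = -1 \<and> w $ k = -1 \<and> (\<forall>l. l \<notin> {i, j, k} \<longrightarrow> w $ l = 0))"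

definition typeIII :: "real^'r \<Rightarrow> bool" where
  "typeIII w \<longleftrightarrow> (\<exists>i j. i \<noteq> j \<and> w $ i = 1 \<and> w $ j = -2 \<and>
      (\<forall>l. l \<notin> {i, j} \<longrightarrow> w $ l = 0))"

definition Jform :: "nat^'r::finite \<Rightarrow> real^'r \<Rightarrow> real^'r \<Rightarrow> real" where
  "Jform d p q = (\<Sum>i\<in>UNIV. p $ i) * (\<Sum>i\<in>UNIV. q $ i) / (real (ndim d) - 1)
      - (\<Sum>i\<in>UNIV. p $ i * q $ i / real (d $ i))"

definition scal_data :: "nat^'r::finite \<Rightarrow> (real^'r) set \<Rightarrow> (real^'r \<Rightarrow> real) \<Rightarrow> bool" where
  "scal_data d W A \<longleftrightarrow>
     CARD('r) \<ge> 2 \<and> (\<forall>i. d $ i \<ge> 1) \<and> finite W \<and>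
     (\<forall>w\<in>W. A w \<noteq> 0) \<and>
     (\<forall>w\<in>W. typeI w \<or> typeII w \<or> typeIII w) \<and>
     (\<forall>w\<in>W. typeI w \<longrightarrow> A w > 0) \<and>
     (\<forall>w\<in>W. \<not> typeI w \<longrightarrow> A w < 0) \<and>
     aff_dim (convex hull W) = int CARD('r) - 1"

text \<open>u = sum over C of F_c e^(c.q) is a (normalised) superpotential.\<close>
definition superpotential ::
  "nat^'r::finite \<Rightarrow> (real^'r) set \<Rightarrow> (real^'r \<Rightarrow> real) \<Rightarrow> (real^'r) set \<Rightarrow> (real^'r \<Rightarrow> real) \<Rightarrow> bool" where
  "superpotential d W A C F \<longleftrightarrow>
     finite C \<and> (\<forall>c\<in>C. F c \<noteq> 0) \<and>
     (\<forall>c\<in>C. (\<Sum>i\<in>UNIV. c $ i) = (real (ndim d) - 1) / 2) \<and>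
     (\<forall>\<xi>. (\<Sum>p\<in>{p \<in> C \<times> C. fst p + snd p = \<xi>}. Jform d (fst p) (snd p) * F (fst p) * F (snd p))
           = (if \<xi> \<in> (\<lambda>w. dvec d + w) ` W then A (\<xi> - dvec d) else 0))"

end

theory Submission
  imports Defs
begin

lemma sum_single_nz:
  assumes "finite S" "p0 \<in> S" "\<And>p. p \<in> S \<Longrightarrow> p \<noteq> p0 \<Longrightarrow> f p = 0"
  shows "sum f S = f p0"
proof -
  have "sum f S = f p0 + sum f (S - {p0})" using assms(1,2) by (rule sum.remove)
  also have "sum f (S - {p0}) = 0" using assms(3) by (intro sum.neutral) auto
  finally show ?thesis by simp
qed

lemma rhs_zero:
  assumes sp: "superpotential d W A C F"
    and high: "\<forall>w\<in>W. inner v ((1/2) *\<^sub>R (dvec d + w)) < t"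
    and xi: "inner v \<xi> \<ge> 2 * t"
  shows "(\<Sum>p\<in>{p \<in> C \<times> C. fst p + snd p = \<xi>}. Jform d (fst p) (snd p) * F (fst p) * F (snd p)) = 0"
proof -
  have "\<xi> \<notin> (\<lambda>w. dvec d + w) ` W"
  proof
    assume "\<xi> \<in> (\<lambda>w. dvec d + w) ` W"
    then obtain w where w: "w \<in> W" "\<xi> = dvec d + w" by auto
    have "inner v ((1/2) *\<^sub>R (dvec d + w)) = inner v \<xi> / 2"
      using w(2) by (simp add: inner_scaleR_right)
    with high w(1) xi show False by force
  qed
  with sp show ?thesis unfolding superpotential_def by auto
qed

lemma key:
  fixes d :: "nat^'r::finite" and W C :: "(real^'r) set"
    and A F :: "real^'r \<Rightarrow> real"
  assumes sp: "superpotential d W A C F" and dpos: "\<forall>i. d $ i \<ge> 1"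
    and x1: "x1 \<in> C" and x2: "x2 \<in> C" and ne: "x1 \<noteq> x2"
    and top: "\<forall>y\<in>C. inner v y \<le> inner v x1"
    and second: "\<forall>y\<in>C. y \<noteq> x1 \<longrightarrow> inner v y \<le> inner v x2"
    and inj: "inj_on (inner v) C"
    and high: "\<forall>w\<in>W. inner v ((1/2) *\<^sub>R (dvec d + w)) < inner v x2"
  shows False
proof -
  have finC: "finite C" and Fnz: "\<forall>c\<in>C. F c \<noteq> 0"
    and sumC: "\<forall>c\<in>C. (\<Sum>i\<in>UNIV. c $ i) = (real (ndim d) - 1) / 2"
    using sp unfolding superpotential_def by auto
  define s where "s = (real (ndim d) - 1) / 2"
  define N where "N = real (ndim d) - 1"
  have J: "Jform d p q = (\<Sum>i\<in>UNIV. p $ i) * (\<Sum>i\<in>UNIV. q $ i) / N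
      - (\<Sum>i\<in>UNIV. p $ i * q $ i / real (d $ i))" for p q
    unfolding Jform_def N_def by simp
  let ?S = "\<lambda>\<xi>. {p \<in> C \<times> C. fst p + snd p = \<xi>}"
  let ?f = "\<lambda>p. Jform d (fst p) (snd p) * F (fst p) * F (snd p)"
  have finS: "finite (?S \<xi>)" for \<xi>
    by (rule finite_subset[of _ "C \<times> C"]) (use finC in auto)
  have l12: "inner v x2 \<le> inner v x1" using top x2 by auto
  have injv: "y = z" if "y \<in> C" "z \<in> C" "inner v y = inner v z" for y z
    using inj that by (auto dest: inj_onD)
  have ladd: "inner v (y + z) = inner v y + inner v z" for y z by (simp add: inner_add_right)
  have e1: "?f (x1, x1) = 0"
  proof -
    have "sum ?f (?S (x1 + x1)) = ?f (x1, x1)"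
    proof (rule sum_single_nz[OF finS])
      show "(x1, x1) \<in> ?S (x1 + x1)" using x1 by auto
      fix p assume p: "p \<in> ?S (x1 + x1)" "p \<noteq> (x1, x1)"
      obtain y z where pyz: "p = (y, z)" by (cases p)
      have yz: "y \<in> C" "z \<in> C" "y + z = x1 + x1" using p pyz by auto
      have "inner v y + inner v z = inner v x1 + inner v x1" using yz(3) ladd by metis
      then have "inner v y = inner v x1" "inner v z = inner v x1" using top yz by (auto intro!: antisym)
      then have "y = x1" "z = x1" using injv yz x1 by auto
      then show "?f p = 0" using p pyz by auto
    qed
    moreover have "sum ?f (?S (x1 + x1)) = 0"
      by (rule rhs_zero[OF sp high]) (unfold ladd, use l12 in linarith)
    ultimately show ?thesis by simp
  qed
  have e2: "?f (x1, x2) + ?f (x2, x1) = 0"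
  proof -
    have "sum ?f (?S (x1 + x2)) = sum ?f {(x1, x2), (x2, x1)}"
    proof (rule sum.mono_neutral_right[OF finS])
      show "{(x1, x2), (x2, x1)} \<subseteq> ?S (x1 + x2)" using x1 x2 by (auto simp: add.commute)
      have "p \<in> {(x1, x2), (x2, x1)}" if p: "p \<in> ?S (x1 + x2)" for p
      proof -
        obtain y z where pyz: "p = (y, z)" by (cases p)
        have yz: "y \<in> C" "z \<in> C" "y + z = x1 + x2" using p pyz by auto
        have s: "inner v y + inner v z = inner v x1 + inner v x2" using yz(3) ladd by metis
        have l12s: "inner v x2 < inner v x1" using l12 injv[OF x2 x1] ne by force
        have "y = x1 \<or> z = x1"
        proof (rule ccontr)
          assume "\<not> (y = x1 \<or> z = x1)"
          then have "inner v y \<le> inner v x2" "inner v z \<le> inner v x2" using second yz by auto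
          with s l12s show False by linarith
        qed
        then show ?thesis using yz pyz by auto
      qed
      then show "\<forall>p\<in>?S (x1 + x2) - {(x1, x2), (x2, x1)}. ?f p = 0" by blast
    qed
    also have "\<dots> = ?f (x1, x2) + ?f (x2, x1)" using ne by simp
    finally have "sum ?f (?S (x1 + x2)) = ?f (x1, x2) + ?f (x2, x1)" .
    moreover have "sum ?f (?S (x1 + x2)) = 0"
      by (rule rhs_zero[OF sp high]) (unfold ladd, use l12 in linarith)
    ultimately show ?thesis by simp
  qed
  have Jsym: "Jform d p q = Jform d q p" for p q
    unfolding J by (simp add: mult.commute)
  have J12: "Jform d x1 x2 = 0"
  proof -
    have "2 * (Jform d x1 x2 * F x1 * F x2) = 0" using e2 Jsym[of x2 x1] by (simp add: algebra_simps)
    then show ?thesis using Fnz x1 x2 by simp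
  qed
  have J11: "Jform d x1 x1 = 0" using e1 Fnz x1 by simp
  define z0 where "z0 = x2 + x2 - x1"
  have Jz: "Jform d x1 (x2 + x2 - x1) = 0" "Jform d (x2 + x2 - x1) x1 = 0"
  proof -
    have sx1: "(\<Sum>i\<in>UNIV. x1 $ i) = s" "(\<Sum>i\<in>UNIV. x2 $ i) = s"
      using sumC x1 x2 by (auto simp: s_def)
    have "(\<Sum>i\<in>UNIV. (x2 + x2 - x1) $ i) = (\<Sum>i\<in>UNIV. x2 $ i) + (\<Sum>i\<in>UNIV. x2 $ i) - (\<Sum>i\<in>UNIV. x1 $ i)"
      by (simp only: vector_add_component vector_minus_component sum.distrib sum_subtractf)
    then have sx: "(\<Sum>i\<in>UNIV. (x2 + x2 - x1) $ i) = s" using sx1 by simp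
    have q: "(\<Sum>i\<in>UNIV. x1 $ i * (x2 + x2 - x1) $ i / real (d $ i))
        = 2 * (\<Sum>i\<in>UNIV. x1 $ i * x2 $ i / real (d $ i)) - (\<Sum>i\<in>UNIV. x1 $ i * x1 $ i / real (d $ i))"
      unfolding sum_distrib_left sum_subtractf[symmetric]
      by (rule sum.cong) (simp_all add: diff_divide_distrib algebra_simps)
    have "Jform d x1 (x2 + x2 - x1) = 2 * Jform d x1 x2 - Jform d x1 x1"
      unfolding J sx sx1 q by (simp add: algebra_simps)
    then show "Jform d x1 (x2 + x2 - x1) = 0" using J12 J11 by simp
    then show "Jform d (x2 + x2 - x1) x1 = 0" using Jsym by metis
  qed
  have J22: "Jform d x2 x2 = 0"
  proof -
    have "sum ?f (?S (x2 + x2)) = ?f (x2, x2)"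
    proof (rule sum_single_nz[OF finS])
      show "(x2, x2) \<in> ?S (x2 + x2)" using x2 by auto
      fix p assume p: "p \<in> ?S (x2 + x2)" "p \<noteq> (x2, x2)"
      obtain y z where pyz: "p = (y, z)" by (cases p)
      have yz: "y \<in> C" "z \<in> C" "y + z = x2 + x2" using p pyz by auto
      have s: "inner v y + inner v z = inner v x2 + inner v x2" using yz(3) ladd by metis
      show "?f p = 0"
      proof (cases "y = x1 \<or> z = x1")
        case True
        then show ?thesis
        proof
          assume "y = x1"
          then have "z = x2 + x2 - x1" using yz(3) by (metis add_diff_cancel_left')
          then show ?thesis using \<open>y = x1\<close> pyz Jz by simp
        next
          assume "z = x1"
          then have "y = x2 + x2 - x1" using yz(3) by (metis add_diff_cancel_right')
          then show ?thesis using \<open>z = x1\<close> pyz Jz by simp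
        qed
      next
        case False
        then have "inner v y \<le> inner v x2" "inner v z \<le> inner v x2" using second yz by auto
        with s have "inner v y = inner v x2" "inner v z = inner v x2" by linarith+
        then have "y = x2" "z = x2" using injv yz x2 by auto
        then show ?thesis using p pyz by auto
      qed
    qed
    moreover have "sum ?f (?S (x2 + x2)) = 0"
      by (rule rhs_zero[OF sp high]) (unfold ladd, linarith)
    ultimately show ?thesis using Fnz x2 by simp
  qed
  \<comment> \<open>Lorentzian contradiction\<close>
  define \<delta> where "\<delta> = x1 - x2"
  have sx1: "(\<Sum>i\<in>UNIV. x1 $ i) = s" "(\<Sum>i\<in>UNIV. x2 $ i) = s"
    using sumC x1 x2 by (auto simp: s_def)
  have "Jform d x1 x1 - 2 * Jform d x1 x2 + Jform d x2 x2 = - (\<Sum>i\<in>UNIV. (\<delta> $ i)^2 / real (d $ i))"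
    unfolding J sx1 \<delta>_def
    by (simp add: algebra_simps power2_eq_square sum_subtractf sum.distrib add_divide_distrib diff_divide_distrib
        sum_distrib_left)
  then have zero: "(\<Sum>i\<in>UNIV. (\<delta> $ i)^2 / real (d $ i)) = 0" using J11 J12 J22 by simp
  have "\<delta> $ i = 0" for i
  proof -
    have "(\<delta> $ i)^2 / real (d $ i) = 0"
      using zero by (subst (asm) sum_nonneg_eq_0_iff) auto
    then show ?thesis using dpos[rule_format, of i] by simp
  qed
  then have "\<delta> = 0" by (simp add: vec_eq_iff)
  with ne show False by (simp add: \<delta>_def)
qed

lemma interior_finite_Union_empty:
  fixes F :: "'a::real_normed_vector set set"
  assumes "finite F" "\<forall>S\<in>F. closed S \<and> interior S = {}"
  shows "interior (\<Union>F) = {}"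
  using assms
proof (induction F rule: finite_induct)
  case empty then show ?case by simp
next
  case (insert A F)
  have "interior (\<Union>F \<union> A) = interior (\<Union>F)"
    by (rule interior_closed_Un_empty_interior) (use insert in auto)
  then show ?case using insert by (simp add: Un_commute)
qed

theorem corollary3p4:
  fixes d :: "nat^'r::finite" and W C :: "(real^'r) set"
    and A F :: "real^'r \<Rightarrow> real"
  assumes "scal_data d W A"
    and "superpotential d W A C F"
    and "c \<in> C" and "a \<in> C" and "c \<noteq> a"
  shows "closed_segment c a \<inter> convex hull ((\<lambda>w. (1/2) *\<^sub>R (dvec d + w)) ` W) \<noteq> {}"
proof
  assume disj: "closed_segment c a \<inter> convex hull ((\<lambda>w. (1/2) *\<^sub>R (dvec d + w)) ` W) = {}"
  define H where "H = (\<lambda>w. (1/2) *\<^sub>R (dvec d + w)) ` W"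
  have finW: "finite W" and dpos: "\<forall>i. d $ i \<ge> 1"
    using assms(1) unfolding scal_data_def by auto
  have finC: "finite C" using assms(2) unfolding superpotential_def by auto
  have finH: "finite H" using finW unfolding H_def by simp
  obtain v0 b where v0: "\<forall>x\<in>convex hull H. inner v0 x < b" "\<forall>x\<in>closed_segment c a. inner v0 x > b"
    using separating_hyperplane_closed_compact[of "convex hull H" "closed_segment c a"]
      disj finH unfolding H_def
    by (auto simp: compact_imp_closed compact_convex_hull finite_imp_compact)
  define Ov where "Ov = (\<Inter>h\<in>H. {v. inner (c - h) v > 0} \<inter> {v. inner (a - h) v > 0})"
  have ic: "inner (x - y) u = inner u x - inner u y" for x y u :: "real^'r"
    by (simp add: inner_commute[of "x - y" u] inner_diff_right)
  have openO: "open Ov" unfolding Ov_def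
    by (rule open_INT[OF finH]) (auto intro!: open_Int open_halfspace_gt)
  have "v0 \<in> Ov"
  proof -
    have "inner v0 h < inner v0 c" "inner v0 h < inner v0 a" if "h \<in> H" for h
    proof -
      have "h \<in> convex hull H" using hull_subset[of H convex] that by auto
      then have "inner v0 h < b" using v0 by auto
      moreover have "c \<in> closed_segment c a" "a \<in> closed_segment c a" by auto
      ultimately show "inner v0 h < inner v0 c" "inner v0 h < inner v0 a" using v0 by fastforce+
    qed
    then show ?thesis unfolding Ov_def by (auto simp: ic)
  qed
  define D where "D = (\<lambda>p. fst p - snd p) ` {p \<in> C \<times> C. fst p \<noteq> snd p}"
  define Z where "Z = \<Union> ((\<lambda>\<delta>. {v. inner \<delta> v = 0}) ` D)"
  have finD: "finite D" unfolding D_def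
    by (rule finite_imageI, rule finite_subset[of _ "C \<times> C"]) (use finC in auto)
  have "interior Z = {}" unfolding Z_def
  proof (rule interior_finite_Union_empty)
    show "finite ((\<lambda>\<delta>. {v. inner \<delta> v = 0}) ` D)" using finD by simp
    have "\<delta> \<noteq> 0" if "\<delta> \<in> D" for \<delta> using that unfolding D_def by auto
    then show "\<forall>S\<in>(\<lambda>\<delta>. {v. inner \<delta> v = 0}) ` D. closed S \<and> interior S = {}"
      by (auto simp: closed_hyperplane)
  qed
  have "\<not> Ov \<subseteq> Z"
  proof
    assume "Ov \<subseteq> Z"
    then have "Ov \<subseteq> interior Z" using openO by (rule interior_maximal)
    with \<open>interior Z = {}\<close> \<open>v0 \<in> Ov\<close> show False by auto
  qed
  then obtain v where vO: "v \<in> Ov" and vZ: "v \<notin> Z" by auto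
  have inj: "inj_on (inner v) C"
  proof (rule inj_onI, rule ccontr)
    fix x y assume xy: "x \<in> C" "y \<in> C" "inner v x = inner v y" "x \<noteq> y"
    then have "x - y \<in> D" unfolding D_def by (auto intro!: image_eqI[of _ _ "(x, y)"])
    moreover have "inner (x - y) v = 0" using xy(3) by (simp add: ic)
    ultimately have "v \<in> Z" unfolding Z_def by auto
    with vZ show False by simp
  qed
  define m1 where "m1 = Max (inner v ` C)"
  have "m1 \<in> inner v ` C" unfolding m1_def using finC assms(3) by (intro Max_in) auto
  then obtain x1 where x1: "x1 \<in> C" "inner v x1 = m1" by auto
  have top: "\<forall>y\<in>C. inner v y \<le> inner v x1" using x1 finC unfolding m1_def by auto
  have ne2: "C - {x1} \<noteq> {}" using assms(3,4,5) by auto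
  define m2 where "m2 = Max (inner v ` (C - {x1}))"
  have "m2 \<in> inner v ` (C - {x1})" unfolding m2_def using finC ne2 by (intro Max_in) auto
  then obtain x2 where x2: "x2 \<in> C - {x1}" "inner v x2 = m2" by auto
  have second: "\<forall>y\<in>C. y \<noteq> x1 \<longrightarrow> inner v y \<le> inner v x2"
    using x2 finC unfolding m2_def by auto
  have high: "\<forall>w\<in>W. inner v ((1/2) *\<^sub>R (dvec d + w)) < inner v x2"
  proof
    fix w assume w: "w \<in> W"
    let ?h = "(1/2) *\<^sub>R (dvec d + w)"
    have "?h \<in> H" using w unfolding H_def by auto
    then have "inner v ?h < inner v c" "inner v ?h < inner v a"
      using vO unfolding Ov_def by (auto simp: ic)
    moreover have "inner v c \<le> inner v x2 \<or> inner v a \<le> inner v x2"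
      using second assms(3,4,5) by metis
    ultimately show "inner v ?h < inner v x2" by linarith
  qed
  show False
    by (rule key[OF assms(2) dpos x1(1) _ _ top second inj high]) (use x2 in auto)
qed

end
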